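(* Let $T$ be a tree with vertex set $[n]=\{1,\dots,n\}$. Then the number of edges permitted by ${\bf oDFS}(T)$ equals the area $a(T)$.
   Context: Ordered depth-first search. For a connected graph $G$ on $[n]$, ${\bf oDFS}(G)$ is the procedure: set $\mathcal O_0=(1)$ (an ordered list, the "stack") and $\mathcal A_0=\emptyset$. For $i=0,1,\dots,n-1$: let $v_i$ be the first element of $\mathcal O_i$; let $\mathcal N_i$ be the set of neighbours of $v_i$ in $[n]\setminus(\mathcal A_i\cup\mathcal O_i)$; set $\mathcal A_{i+1}=\mathcal A_i\cup\{v_i\}$; form $\mathcal O_{i+1}$ by removing $v_i$ from the front of $\mathcal O_i$ and then placing the elements of $\mathcal N_i$, in increasing order, at the front of the remaining list. The depth-first walk is $X(i)=|\mathcal O_i|-1$ for $0\le i<n$. For a tree $T$ on $[n]$ (running ${\bf oDFS}(T)$), its area is $a(T)=\sum_{i=1}^{n-1}X(i)$. An edge $uv$ not in $T$ is permitted by ${\bf oDFS}(T)$ if there is $i\in\{0,\dots,n-1\}$ with $u,v\in\mathcal O_i$. *)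

theory Defs
  imports Main
begin

definition graph_on :: "nat \<Rightarrow> nat set set \<Rightarrow> bool" where
  "graph_on n E \<longleftrightarrow> (\<forall>e\<in>E. \<exists>u v. e = {u, v} \<and> u \<noteq> v \<and> u \<in> {1..n} \<and> v \<in> {1..n})"

definition adj :: "nat set set \<Rightarrow> nat \<Rightarrow> nat \<Rightarrow> bool" where
  "adj E u v \<longleftrightarrow> {u, v} \<in> E \<and> u \<noteq> v"

definition connected_on :: "nat \<Rightarrow> nat set set \<Rightarrow> bool" where
  "connected_on n E \<longleftrightarrow> (\<forall>u\<in>{1..n}. \<forall>v\<in>{1..n}. (adj E)\<^sup>*\<^sup>* u v)"

text \<open>Acyclic: no edge lies on a cycle, i.e. the endpoints of every edge
  are disconnected once that edge is removed.\<close>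
definition acyclic_graph :: "nat set set \<Rightarrow> bool" where
  "acyclic_graph E \<longleftrightarrow> (\<forall>u v. adj E u v \<longrightarrow> \<not> (adj (E - {{u, v}}))\<^sup>*\<^sup>* u v)"

definition is_tree_on :: "nat \<Rightarrow> nat set set \<Rightarrow> bool" where
  "is_tree_on n E \<longleftrightarrow> n \<ge> 1 \<and> graph_on n E \<and> connected_on n E \<and> acyclic_graph E"

text \<open>One step of oDFS: state is (stack O_i, set A_i).\<close>
definition odfs_step :: "nat \<Rightarrow> nat set set \<Rightarrow> nat list \<times> nat set \<Rightarrow> nat list \<times> nat set" where
  "odfs_step n E st = (let S = fst st; A = snd st; v = hd S;
      N = {u \<in> {1..n}. adj E v u \<and> u \<notin> A \<and> u \<notin> set S}
    in (sorted_list_of_set N @ tl S, A \<union> {v}))"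

definition odfs_state :: "nat \<Rightarrow> nat set set \<Rightarrow> nat \<Rightarrow> nat list \<times> nat set" where
  "odfs_state n E i = (odfs_step n E ^^ i) ([1], {})"

definition odfs_stack :: "nat \<Rightarrow> nat set set \<Rightarrow> nat \<Rightarrow> nat list" where
  "odfs_stack n E i = fst (odfs_state n E i)"

definition dfs_walk :: "nat \<Rightarrow> nat set set \<Rightarrow> nat \<Rightarrow> int" where
  "dfs_walk n E i = int (length (odfs_stack n E i)) - 1"

definition tree_area :: "nat \<Rightarrow> nat set set \<Rightarrow> int" where
  "tree_area n E = (\<Sum>i=1..n-1. dfs_walk n E i)"

definition permitted_edges :: "nat \<Rightarrow> nat set set \<Rightarrow> nat set set" where
  "permitted_edges n E = {{u, v} | u v. u \<in> {1..n} \<and> v \<in> {1..n} \<and> u \<noteq> v \<and> {u, v} \<notin> E \<and>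
      (\<exists>i\<in>{0..n-1}. u \<in> set (odfs_stack n E i) \<and> v \<in> set (odfs_stack n E i))}"

end

theory Submission
  imports Defs
begin

lemma step_exists: "\<not> P i \<Longrightarrow> P m \<Longrightarrow> i \<le> m \<Longrightarrow> \<exists>j. i \<le> j \<and> j < m \<and> \<not> P j \<and> P (Suc j)"
proof (induction m)
  case 0 then show ?case by auto
next
  case (Suc m)
  show ?case
  proof (cases "P m")
    case True
    with Suc show ?thesis by (metis le_Suc_eq less_SucI)
  next
    case False
    with Suc show ?thesis by (metis le_Suc_eq lessI)
  qed
qed

lemma adj_sym: "adj F a b \<Longrightarrow> adj F b a"
  unfolding adj_def by (auto simp: insert_commute)

lemma rtranclp_adj_sym: "(adj F)\<^sup>*\<^sup>* a b \<Longrightarrow> (adj F)\<^sup>*\<^sup>* b a"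
proof (induction rule: rtranclp.induct)
  case (rtrancl_refl a) then show ?case by simp
next
  case (rtrancl_into_rtrancl a b c)
  then show ?case by (meson adj_sym converse_rtranclp_into_rtranclp)
qed

lemma in_tl: "x \<in> set (tl xs) \<Longrightarrow> x \<in> set xs" by (cases xs) auto

locale odfs =
  fixes n :: nat and E :: "nat set set"
  assumes tree: "is_tree_on n E"
begin

abbreviation S where "S i \<equiv> odfs_stack n E i"
abbreviation A where "A i \<equiv> snd (odfs_state n E i)"

lemma n_ge: "n \<ge> 1" using tree unfolding is_tree_on_def by auto

lemma adj_range: "adj E a u \<Longrightarrow> u \<in> {1..n}"
proof -
  assume "adj E a u"
  then have "{a,u} \<in> E" unfolding adj_def by auto
  with tree obtain x y where "{a,u} = {x,y}" "x \<in> {1..n}" "y \<in> {1..n}"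
    unfolding is_tree_on_def graph_on_def by blast
  then show ?thesis by (metis doubleton_eq_iff)
qed

lemma S0: "S 0 = [1]" and A0: "A 0 = {}"
  by (auto simp: odfs_stack_def odfs_state_def)

lemma step: "S (Suc i) = sorted_list_of_set {u \<in> {1..n}. adj E (hd (S i)) u \<and> u \<notin> A i \<and> u \<notin> set (S i)} @ tl (S i)"
  and stepA: "A (Suc i) = A i \<union> {hd (S i)}"
  by (auto simp: odfs_stack_def odfs_state_def odfs_step_def Let_def)

lemma A_mono: "i \<le> j \<Longrightarrow> A i \<subseteq> A j"
  by (induction j rule: dec_induct) (auto simp: stepA)

lemma popped: "hd (S i) \<in> A (Suc i)" by (simp add: stepA)

definition Inv where "Inv i \<longleftrightarrow> distinct (S i) \<and> set (S i) \<inter> A i = {} \<and> set (S i) \<subseteq> {1..n}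
  \<and> A i \<subseteq> {1..n} \<and> card (A i) = i \<and> 1 \<in> A i \<union> set (S i)
  \<and> (\<forall>a\<in>A i. \<forall>u. adj E a u \<longrightarrow> u \<in> A i \<union> set (S i))
  \<and> (\<forall>x\<in>A i \<union> set (S i). (\<lambda>a b. adj E a b \<and> a \<in> A i)\<^sup>*\<^sup>* 1 x)"

lemma nonempty_of_Inv: assumes "Inv i" "i < n" shows "S i \<noteq> []"
proof
  assume e: "S i = []"
  have cl: "\<forall>a\<in>A i. \<forall>u. adj E a u \<longrightarrow> u \<in> A i" and one: "1 \<in> A i" and sub: "A i \<subseteq> {1..n}"
    and c: "card (A i) = i"
    using assms(1) e unfolding Inv_def by auto
  have "(adj E)\<^sup>*\<^sup>* 1 v \<Longrightarrow> v \<in> A i" for v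
    by (induction rule: rtranclp_induct) (use one cl in auto)
  moreover have "(adj E)\<^sup>*\<^sup>* 1 v" if "v \<in> {1..n}" for v
    using tree that n_ge unfolding is_tree_on_def connected_on_def by auto
  ultimately have "{1..n} \<subseteq> A i" by auto
  then have "card {1..n} \<le> card (A i)" using sub by (intro card_mono) (auto intro: finite_subset)
  then have "n \<le> card (A i)" by simp
  with c assms(2) show False by simp
qed

lemma Inv: "i \<le> n \<Longrightarrow> Inv i"
proof (induction i)
  case 0
  show ?case unfolding Inv_def using S0 A0 n_ge by auto
next
  case (Suc i)
  then have I: "Inv i" and lt: "i < n" by auto
  obtain v rest where Si: "S i = v # rest" using nonempty_of_Inv[OF I lt] by (cases "S i") auto
  define N where "N = {u \<in> {1..n}. adj E v u \<and> u \<notin> A i \<and> u \<notin> set (S i)}"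
  have fN: "finite N" unfolding N_def by auto
  have S': "S (Suc i) = sorted_list_of_set N @ rest" using step[of i] Si N_def by simp
  have A': "A (Suc i) = A i \<union> {v}" using stepA[of i] Si by simp
  have setS': "set (S (Suc i)) = N \<union> set rest" using S' fN by simp
  from I have d: "distinct (v # rest)" and dj: "set (v#rest) \<inter> A i = {}" and sr: "set (v#rest) \<subseteq> {1..n}"
    and sa: "A i \<subseteq> {1..n}" and c: "card (A i) = i" and o: "1 \<in> A i \<union> set (v#rest)"
    and cl: "\<forall>a\<in>A i. \<forall>u. adj E a u \<longrightarrow> u \<in> A i \<union> set (v#rest)"
    and rc: "\<forall>x\<in>A i \<union> set (v#rest). (\<lambda>a b. adj E a b \<and> a \<in> A i)\<^sup>*\<^sup>* 1 x"
    unfolding Inv_def Si by auto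
  have Nd: "N \<inter> set (v#rest) = {}" "N \<inter> A i = {}" "N \<subseteq> {1..n}" unfolding N_def Si by auto
  have fA: "finite (A i)" using sa finite_subset by blast
  have "distinct (S (Suc i))" using S' d Nd fN by auto
  moreover have "set (S (Suc i)) \<inter> A (Suc i) = {}" using setS' A' Nd dj d by auto
  moreover have "set (S (Suc i)) \<subseteq> {1..n}" using setS' Nd sr by auto
  moreover have "A (Suc i) \<subseteq> {1..n}" using A' sa sr by auto
  moreover have "card (A (Suc i)) = Suc i" using A' c fA dj by auto
  moreover have "1 \<in> A (Suc i) \<union> set (S (Suc i))" using o A' setS' by auto
  moreover have "\<forall>a\<in>A (Suc i). \<forall>u. adj E a u \<longrightarrow> u \<in> A (Suc i) \<union> set (S (Suc i))"
  proof (intro ballI allI impI)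
    fix a u assume a: "a \<in> A (Suc i)" and ad: "adj E a u"
    show "u \<in> A (Suc i) \<union> set (S (Suc i))"
    proof (cases "a = v")
      case True
      with ad adj_range have "u \<in> {1..n}" by blast
      then show ?thesis using True ad A' setS' unfolding N_def Si by auto
    next
      case False
      with a A' have "a \<in> A i" by auto
      with cl ad show ?thesis using A' setS' by auto
    qed
  qed
  moreover have "\<forall>x\<in>A (Suc i) \<union> set (S (Suc i)). (\<lambda>a b. adj E a b \<and> a \<in> A (Suc i))\<^sup>*\<^sup>* 1 x"
  proof
    fix x assume x: "x \<in> A (Suc i) \<union> set (S (Suc i))"
    have mono: "(\<lambda>a b. adj E a b \<and> a \<in> A i)\<^sup>*\<^sup>* 1 y \<Longrightarrow> (\<lambda>a b. adj E a b \<and> a \<in> A (Suc i))\<^sup>*\<^sup>* 1 y" for y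
      by (rule rtranclp_mono[THEN predicate2D, rotated]) (auto simp: A')
    show "(\<lambda>a b. adj E a b \<and> a \<in> A (Suc i))\<^sup>*\<^sup>* 1 x"
    proof (cases "x \<in> N")
      case True
      have "(\<lambda>a b. adj E a b \<and> a \<in> A (Suc i))\<^sup>*\<^sup>* 1 v" using mono rc by auto
      moreover have "adj E v x" using True N_def by auto
      ultimately show ?thesis using A' by (auto intro: rtranclp.rtrancl_into_rtrancl)
    next
      case False
      then have "x \<in> A i \<union> set (v#rest)" using x A' setS' by auto
      then show ?thesis using mono rc by auto
    qed
  qed
  ultimately show ?case unfolding Inv_def by (intro conjI)
qed

lemma nonempty: "i < n \<Longrightarrow> S i \<noteq> []"
  using nonempty_of_Inv Inv by auto

lemma A_n: "A n = {1..n}"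
proof -
  have "A n \<subseteq> {1..n}" "card (A n) = n" using Inv[of n] unfolding Inv_def by auto
  then show ?thesis by (metis card_atLeastAtMost card_subset_eq diff_Suc_1 finite_atLeastAtMost)
qed

lemma persist: "w \<in> set (S i) \<Longrightarrow> i \<le> j \<Longrightarrow> w \<notin> A j \<Longrightarrow> w \<in> set (S j)"
proof (induction j)
  case 0 then show ?case by simp
next
  case (Suc j)
  show ?case
  proof (cases "i = Suc j")
    case True then show ?thesis using Suc by simp
  next
    case False
    then have "i \<le> j" using Suc by simp
    moreover have "w \<notin> A j" using Suc(4) A_mono[of j "Suc j"] by auto
    ultimately have w: "w \<in> set (S j)" using Suc by simp
    have "w \<noteq> hd (S j)" using popped[of j] Suc(4) by auto
    then have "w \<in> set (tl (S j))" using w by (cases "S j") auto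
    then show ?thesis using step[of j] by simp
  qed
qed

lemma exists_pop: assumes "u \<in> set (S i)" "i \<le> n"
  shows "\<exists>j. i \<le> j \<and> j < n \<and> u = hd (S j) \<and> u \<notin> A j"
proof -
  have "u \<notin> A i" using Inv[OF assms(2)] assms(1) unfolding Inv_def by auto
  moreover have "u \<in> A n" using A_n Inv[OF assms(2)] assms(1) unfolding Inv_def by auto
  ultimately obtain j where j: "i \<le> j" "j < n" "u \<notin> A j" "u \<in> A (Suc j)"
    using step_exists[of "\<lambda>k. u \<in> A k" i n] assms(2) by blast
  then show ?thesis using stepA[of j] by auto
qed

lemma no_edge: assumes "i \<le> n" "u \<in> set (S i)" "w \<in> set (S i)" "u \<noteq> w"
  shows "{u, w} \<notin> E"
proof
  assume e: "{u,w} \<in> E"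
  have I: "Inv i" using Inv assms(1) by auto
  have nA: "u \<notin> A i" "w \<notin> A i" using I assms unfolding Inv_def by auto
  have le: "(\<lambda>a b. adj E a b \<and> a \<in> A i) \<le> adj (E - {{u,w}})"
  proof (intro predicate2I)
    fix a b assume "adj E a b \<and> a \<in> A i"
    moreover then have "{a,b} \<noteq> {u,w}" using nA by auto
    ultimately show "adj (E - {{u, w}}) a b" unfolding adj_def by auto
  qed
  have "(adj (E - {{u,w}}))\<^sup>*\<^sup>* 1 x" if "x \<in> set (S i)" for x
    using I that rtranclp_mono[OF le] unfolding Inv_def by blast
  then have "(adj (E - {{u,w}}))\<^sup>*\<^sup>* u w"
    using assms rtranclp_adj_sym by (meson rtranclp_trans)
  moreover have "adj E u w" using e assms(4) unfolding adj_def by auto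
  ultimately show False using tree unfolding is_tree_on_def acyclic_graph_def by blast
qed

definition Sig where "Sig = Sigma {..<n} (\<lambda>i. set (tl (S i)))"

lemma hd_ne: "i < j \<Longrightarrow> j < n \<Longrightarrow> hd (S i) \<noteq> hd (S j)"
proof
  assume ij: "i < j" "j < n" and eq: "hd (S i) = hd (S j)"
  have "hd (S i) \<in> A j" using popped[of i] A_mono[of "Suc i" j] ij by auto
  moreover have "hd (S j) \<in> set (S j)" using nonempty[OF ij(2)] by simp
  ultimately show False using eq Inv[of j] ij unfolding Inv_def by auto
qed

lemma tl_not_A: "i < j \<Longrightarrow> j \<le> n \<Longrightarrow> hd (S i) \<notin> set (S j)"
proof
  assume ij: "i < j" "j \<le> n" and m: "hd (S i) \<in> set (S j)"
  have "hd (S i) \<in> A j" using popped[of i] A_mono[of "Suc i" j] ij by auto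
  then show False using m Inv[of j] ij unfolding Inv_def by auto
qed

lemma hd_notin_tl: "i \<le> n \<Longrightarrow> hd (S i) \<notin> set (tl (S i))"
  using Inv[of i] unfolding Inv_def by (cases "S i") auto

lemma inj: "inj_on (\<lambda>(i,w). {hd (S i), w}) Sig"
proof (rule inj_onI, clarify)
  fix i w j w' assume a: "(i,w) \<in> Sig" "(j,w') \<in> Sig" and eq: "{hd (S i), w} = {hd (S j), w'}"
  have i: "i < n" "w \<in> set (tl (S i))" and j: "j < n" "w' \<in> set (tl (S j))" using a Sig_def by auto
  have wS: "w \<in> set (S i)" "w' \<in> set (S j)" using i j by (auto dest: list.set_sel(2)[rotated] simp: in_tl)
  show "i = j \<and> w = w'"
  proof (cases "hd (S i) = hd (S j)")
    case True
    then have "i = j" using hd_ne i j by (metis linorder_neqE_nat)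
    then show ?thesis using eq by (auto simp: doubleton_eq_iff)
  next
    case False
    then have x: "hd (S i) = w'" "w = hd (S j)" using eq by (auto simp: doubleton_eq_iff)
    show ?thesis
    proof (cases i j rule: linorder_cases)
      case less then show ?thesis using tl_not_A[of i j] x wS j by auto
    next
      case equal then show ?thesis using x hd_notin_tl j by auto
    next
      case greater then show ?thesis using tl_not_A[of j i] x wS i by auto
    qed
  qed
qed

lemma pair_in: assumes "i < n" "u \<in> set (S i)" "v \<in> set (S i)" "ju < jv"
  "i \<le> ju" "ju < n" "u = hd (S ju)" "i \<le> jv" "jv < n" "v = hd (S jv)" "v \<notin> A jv"
  shows "{u,v} \<in> (\<lambda>(i,w). {hd (S i), w}) ` Sig"
proof -
  have "v \<notin> A ju" using assms A_mono[of ju jv] by auto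
  then have vs: "v \<in> set (S ju)" using persist assms by auto
  have "v \<noteq> u" using hd_ne[OF assms(4) assms(9)] assms(7,10) by auto
  then have "v \<in> set (tl (S ju))" using vs assms(7) by (cases "S ju") auto
  then have "(ju, v) \<in> Sig" using assms Sig_def by auto
  then show ?thesis using assms(7) by force
qed

lemma perm_eq: "permitted_edges n E = (\<lambda>(i,w). {hd (S i), w}) ` Sig"
proof
  show "permitted_edges n E \<subseteq> (\<lambda>(i,w). {hd (S i), w}) ` Sig"
  proof
    fix e assume "e \<in> permitted_edges n E"
    then obtain u v i where e: "e = {u,v}" "u \<noteq> v" "i \<in> {0..n-1}" "u \<in> set (S i)" "v \<in> set (S i)"
      unfolding permitted_edges_def by blast
    have i: "i < n" using e(3) n_ge by auto
    obtain ju where ju: "i \<le> ju" "ju < n" "u = hd (S ju)" "u \<notin> A ju" using exists_pop e(4) i by fastforce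
    obtain jv where jv: "i \<le> jv" "jv < n" "v = hd (S jv)" "v \<notin> A jv" using exists_pop e(5) i by fastforce
    have "ju \<noteq> jv" using ju jv e(2) by auto
    then consider "ju < jv" | "jv < ju" by linarith
    then show "e \<in> (\<lambda>(i,w). {hd (S i), w}) ` Sig"
    proof cases
      case 1 then show ?thesis using pair_in[OF i e(4) e(5) 1 ju(1-3) jv] e(1) by simp
    next
      case 2 then show ?thesis using pair_in[OF i e(5) e(4) 2 jv(1-3) ju] e(1) by (simp add: insert_commute)
    qed
  qed
next
  show "(\<lambda>(i,w). {hd (S i), w}) ` Sig \<subseteq> permitted_edges n E"
  proof clarify
    fix i w assume "(i, w) \<in> Sig"
    then have i: "i < n" "w \<in> set (tl (S i))" using Sig_def by auto
    have ne: "S i \<noteq> []" using nonempty i by auto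
    have ws: "w \<in> set (S i)" using i(2) by (simp add: in_tl)
    have hs: "hd (S i) \<in> set (S i)" using ne by simp
    have neq: "hd (S i) \<noteq> w" using hd_notin_tl[of i] i by auto
    have r: "set (S i) \<subseteq> {1..n}" using Inv[of i] i unfolding Inv_def by auto
    have "{hd (S i), w} \<notin> E" using no_edge[of i] i hs ws neq by auto
    moreover have "i \<in> {0..n-1}" using i by auto
    ultimately show "{hd (S i), w} \<in> permitted_edges n E"
      unfolding permitted_edges_def using hs ws neq r by blast
  qed
qed

lemma main: "int (card (permitted_edges n E)) = tree_area n E"
proof -
  have "card (permitted_edges n E) = card Sig" using perm_eq inj card_image by metis
  also have "\<dots> = (\<Sum>i<n. card (set (tl (S i))))" unfolding Sig_def by (simp add: card_SigmaI)
  also have "\<dots> = (\<Sum>i<n. length (S i) - 1)"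
  proof (rule sum.cong)
    fix i assume "i \<in> {..<n}"
    then have "distinct (S i)" using Inv[of i] unfolding Inv_def by auto
    then show "card (set (tl (S i))) = length (S i) - 1"
      by (simp add: distinct_card distinct_tl)
  qed simp
  finally have "int (card (permitted_edges n E)) = (\<Sum>i<n. int (length (S i)) - 1)"
    using nonempty by (simp add: of_nat_diff Suc_le_eq)
  also have "\<dots> = (\<Sum>i\<in>insert 0 {1..n-1}. int (length (S i)) - 1)"
    using n_ge by (intro sum.cong) auto
  also have "\<dots> = (\<Sum>i=1..n-1. int (length (S i)) - 1)" using S0 by simp
  also have "\<dots> = tree_area n E" unfolding tree_area_def dfs_walk_def by simp
  finally show ?thesis .
qed

end

theorem lemma1:
  fixes n :: nat and T :: "nat set set"
  assumes "is_tree_on n T"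
  shows "int (card (permitted_edges n T)) = tree_area n T"
  using odfs.main[of n T] odfs.intro assms by blast

end
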